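(* Let $D$ be an arc-colored complete digraph of order $n\geq 4$. If $D$ contains no rainbow triangle, then there is a vertex $v\in V(D)$ with $d^{s}(v)\leq\lfloor\frac{n}{2}\rfloor$.
   Context: The complete digraph on $n$ vertices has both arcs $xy,yx$ for every pair of distinct vertices. An arc-coloring is any map $C:A(D)\to\mathbb{N}$. A rainbow triangle is a directed 3-cycle with pairwise distinct arc colors. A color $c$ used in $D$ is saturated by $v$ if every arc of color $c$ is incident to $v$; $d^{s}(v)$ is the number of colors saturated by $v$. *)

theory Defs
  imports Main
begin

text \<open>An arc-colouring is a map C :: 'a \<Rightarrow> 'a \<Rightarrow> nat, where
C x y is the colour of arc xy (values off the arc set are irrelevant).\<close>

definition arcs :: "'a set \<Rightarrow> ('a \<times> 'a) set" where
  "arcs V = {(x, y). x \<in> V \<and> y \<in> V \<and> x \<noteq> y}"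

definition colours_used :: "'a set \<Rightarrow> ('a \<Rightarrow> 'a \<Rightarrow> nat) \<Rightarrow> nat set" where
  "colours_used V C = (\<lambda>(x, y). C x y) ` arcs V"

definition rainbow_triangle :: "'a set \<Rightarrow> ('a \<Rightarrow> 'a \<Rightarrow> nat) \<Rightarrow> 'a \<Rightarrow> 'a \<Rightarrow> 'a \<Rightarrow> bool" where
  "rainbow_triangle V C x y z \<longleftrightarrow>
     x \<in> V \<and> y \<in> V \<and> z \<in> V \<and> x \<noteq> y \<and> y \<noteq> z \<and> x \<noteq> z \<and>
     C x y \<noteq> C y z \<and> C y z \<noteq> C z x \<and> C x y \<noteq> C z x"

definition saturated_by :: "'a set \<Rightarrow> ('a \<Rightarrow> 'a \<Rightarrow> nat) \<Rightarrow> nat \<Rightarrow> 'a \<Rightarrow> bool" where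
  "saturated_by V C c v \<longleftrightarrow>
     c \<in> colours_used V C \<and> (\<forall>(x, y) \<in> arcs V. C x y = c \<longrightarrow> x = v \<or> y = v)"

definition sat_degree :: "'a set \<Rightarrow> ('a \<Rightarrow> 'a \<Rightarrow> nat) \<Rightarrow> 'a \<Rightarrow> nat" where
  "sat_degree V C v = card {c. saturated_by V C c v}"

end

theory Submission
  imports Defs
begin

lemma sat_inc:
  assumes "saturated_by V C c v" "x \<in> V" "y \<in> V" "x \<noteq> y" "C x y = c"
  shows "x = v \<or> y = v"
  using assms unfolding saturated_by_def arcs_def by auto

lemma sat_used:
  assumes "saturated_by V C c v"
  shows "\<exists>x\<in>V. \<exists>y\<in>V. x \<noteq> y \<and> C x y = c"
  using assms unfolding saturated_by_def colours_used_def arcs_def by auto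

lemma norb:
  assumes "\<not> (\<exists>x y z. rainbow_triangle V C x y z)" "x \<in> V" "y \<in> V" "z \<in> V"
    "x \<noteq> y" "y \<noteq> z" "x \<noteq> z"
  shows "C x y = C y z \<or> C y z = C z x \<or> C x y = C z x"
  using assms unfolding rainbow_triangle_def by blast

lemma F1:
  assumes nr: "\<not> (\<exists>x y z. rainbow_triangle V C x y z)"
    and "v \<in> V" "u \<in> V" "w \<in> V" "u \<noteq> v" "w \<noteq> v" "u \<noteq> w"
    and s1: "saturated_by V C (C v u) v" and s2: "saturated_by V C (C w v) v"
  shows "C v u = C w v"
proof -
  have "C u w \<noteq> C v u" using sat_inc[OF s1, of u w] assms by auto
  moreover have "C u w \<noteq> C w v" using sat_inc[OF s2, of u w] assms by auto
  ultimately show ?thesis using norb[OF nr, of v u w] assms by auto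
qed

lemma L:
  assumes nr: "\<not> (\<exists>x y z. rainbow_triangle V C x y z)"
    and "v \<in> V" "u \<in> V" "w \<in> V" "u \<noteq> v" "w \<noteq> v"
    and s1: "saturated_by V C (C v u) v" and s2: "saturated_by V C (C w v) v"
    and ne: "C v u \<noteq> C w v"
  shows "{c. saturated_by V C c v} \<subseteq> {C v u, C w v}"
proof
  fix e assume "e \<in> {c. saturated_by V C c v}"
  hence se: "saturated_by V C e v" by simp
  have uw: "u = w" using F1[OF nr] assms by blast
  obtain x y where xy: "x \<in> V" "y \<in> V" "x \<noteq> y" "C x y = e" using sat_used[OF se] by blast
  have "x = v \<or> y = v" using sat_inc[OF se xy] .
  then show "e \<in> {C v u, C w v}"
  proof
    assume "x = v"
    show ?thesis
    proof (cases "y = u")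
      case True then show ?thesis using xy \<open>x = v\<close> by simp
    next
      case False
      have "C v y = C u v" using F1[OF nr, of v y u] xy \<open>x = v\<close> se s2 uw assms False by auto
      then show ?thesis using xy \<open>x = v\<close> uw by simp
    qed
  next
    assume "y = v"
    show ?thesis
    proof (cases "x = u")
      case True then show ?thesis using xy \<open>y = v\<close> uw by simp
    next
      case False
      have "C v u = C x v" using F1[OF nr, of v u x] xy \<open>y = v\<close> se s1 assms False by auto
      then show ?thesis using xy \<open>y = v\<close> by simp
    qed
  qed
qed

lemma finS:
  assumes "finite V"
  shows "finite {c. saturated_by V C c v}"
proof -
  have "arcs V \<subseteq> V \<times> V" unfolding arcs_def by auto
  hence "finite (arcs V)" using assms finite_subset by blast
  hence "finite (colours_used V C)" unfolding colours_used_def by simp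
  moreover have "{c. saturated_by V C c v} \<subseteq> colours_used V C" unfolding saturated_by_def by auto
  ultimately show ?thesis by (rule finite_subset[rotated])
qed

lemma card2: "card {a, b} \<le> 2"
  by (simp add: card_insert_if)

lemma types:
  assumes nr: "\<not> (\<exists>x y z. rainbow_triangle V C x y z)" and fin: "finite V"
    and v: "v \<in> V" and big: "card {c. saturated_by V C c v} \<ge> 3"
  shows "(\<forall>w\<in>V. w \<noteq> v \<longrightarrow> \<not> saturated_by V C (C w v) v) \<or>
         (\<forall>u\<in>V. u \<noteq> v \<longrightarrow> \<not> saturated_by V C (C v u) v)"
proof (rule ccontr)
  let ?S = "{c. saturated_by V C c v}"
  assume "\<not> ?thesis"
  then obtain w u where w: "w \<in> V" "w \<noteq> v" "saturated_by V C (C w v) v"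
    and u: "u \<in> V" "u \<noteq> v" "saturated_by V C (C v u) v" by blast
  have small: "card ?S \<le> 2" if "?S \<subseteq> {a, b}" for a b
    using card_mono[OF _ that] card2[of a b] by (meson finite.emptyI finite.insertI le_trans)
  show False
  proof (cases "C v u = C w v")
    case False
    then show False using small L[OF nr v u(1) w(1) u(2) w(2) u(3) w(3)] big by fastforce
  next
    case True
    have "\<not> ?S \<subseteq> {C v u}" using small[of "C v u" "C v u"] big by auto
    then obtain e where e: "saturated_by V C e v" "e \<noteq> C v u" by auto
    obtain x y where xy: "x \<in> V" "y \<in> V" "x \<noteq> y" "C x y = e" using sat_used[OF e(1)] by blast
    have "x = v \<or> y = v" using sat_inc[OF e(1) xy] .
    then show False
    proof
      assume "x = v"
      then show False using small L[OF nr v xy(2) w(1) _ w(2) _ w(3)] big xy e True by fastforce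
    next
      assume "y = v"
      then show False using small L[OF nr v u(1) xy(1) u(2) _ u(3)] big xy e True by fastforce
    qed
  qed
qed

theorem lemma2:
  fixes V :: "'a set" and C :: "'a \<Rightarrow> 'a \<Rightarrow> nat"
  assumes "finite V" and "card V \<ge> 4"
    and "\<not> (\<exists>x y z. rainbow_triangle V C x y z)"
  shows "\<exists>v \<in> V. sat_degree V C v \<le> card V div 2"
proof (rule ccontr)
  assume neg: "\<not> ?thesis"
  define k where "k = card V div 2"
  define S where "S v = {c. saturated_by V C c v}" for v
  have big: "card (S v) \<ge> k + 1" if "v \<in> V" for v
    using neg that unfolding sat_degree_def S_def k_def by force
  have k2: "k \<ge> 2" using assms(2) unfolding k_def by simp
  have finS': "finite (S v)" for v unfolding S_def using finS[OF assms(1)] .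
  define Ot where "Ot = {v\<in>V. \<forall>w\<in>V. w \<noteq> v \<longrightarrow> C w v \<notin> S v}"
  define It where "It = {v\<in>V. \<forall>u\<in>V. u \<noteq> v \<longrightarrow> C v u \<notin> S v}"
  have cover: "v \<in> Ot \<or> v \<in> It" if "v \<in> V" for v
    using types[OF assms(3,1) that] big[OF that] k2 that unfolding Ot_def It_def S_def by auto
  have fOt: "finite Ot" unfolding Ot_def using assms(1) by auto
  have fIt: "finite It" unfolding It_def using assms(1) by auto
  have disj: "Ot \<inter> It = {}"
  proof (rule ccontr)
    assume "Ot \<inter> It \<noteq> {}"
    then obtain v where v: "v \<in> Ot" "v \<in> It" by blast
    have "card (S v) \<ge> k + 1" using big[of v] v unfolding Ot_def by auto
    hence "S v \<noteq> {}" by auto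
    then obtain e where se0: "saturated_by V C e v" unfolding S_def by auto
    obtain x y where xy0: "x \<in> V" "y \<in> V" "x \<noteq> y" "C x y = e"
      using sat_used[OF se0] by blast
    have xy5: "x = v \<or> y = v" using sat_inc[OF se0 xy0] .
    note xy = xy0 xy5
    then show False using v unfolding Ot_def It_def S_def
      using \<open>saturated_by V C e v\<close> by auto
  qed
  have OtoI: "card It \<ge> k + 1" if v: "v \<in> Ot" for v
  proof -
    define A where "A = {u\<in>V. u \<noteq> v \<and> C v u \<in> S v}"
    have vV: "v \<in> V" using v Ot_def by auto
    have "S v \<subseteq> (C v) ` A"
    proof
      fix e assume "e \<in> S v"
      hence se: "saturated_by V C e v" unfolding S_def by simp
      obtain x y where xy0: "x \<in> V" "y \<in> V" "x \<noteq> y" "C x y = e"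
        using sat_used[OF se] by blast
      have xy5: "x = v \<or> y = v" using sat_inc[OF se xy0] .
      note xy = xy0 xy5
      have "y \<noteq> v" using xy v se unfolding Ot_def S_def by auto
      hence "x = v" using xy by auto
      then show "e \<in> (C v) ` A" using xy se \<open>y \<noteq> v\<close> unfolding A_def S_def by auto
    qed
    moreover have fA: "finite A" unfolding A_def using assms(1) by auto
    ultimately have "card (S v) \<le> card ((C v) ` A)" by (simp add: card_mono)
    also have "\<dots> \<le> card A" by (rule card_image_le[OF fA])
    finally have "card (S v) \<le> card A" .
    moreover have "A \<subseteq> It"
    proof
      fix u assume uA: "u \<in> A"
      hence u: "u \<in> V" "u \<noteq> v" "saturated_by V C (C v u) v" unfolding A_def S_def by auto
      show "u \<in> It"
      proof (rule ccontr)
        assume "u \<notin> It"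
        hence uO: "u \<in> Ot" using cover u by auto
        have "\<not> S u \<subseteq> {C u v}"
          using card_mono[of "{C u v}" "S u"] big[OF u(1)] k2 by auto
        then obtain e where e: "saturated_by V C e u" "e \<noteq> C u v" unfolding S_def by auto
        obtain x y where xy0: "x \<in> V" "y \<in> V" "x \<noteq> y" "C x y = e"
          using sat_used[OF e(1)] by blast
        have xy5: "x = u \<or> y = u" using sat_inc[OF e(1) xy0] .
        note xy = xy0 xy5
        have "y \<noteq> u" using xy uO e unfolding Ot_def S_def by auto
        hence xu: "x = u" using xy by auto
        have yv: "y \<noteq> v" using xy xu e by auto
        have "C v u \<noteq> C u y" using sat_inc[OF u(3), of u y] xy xu yv u by auto
        moreover have "C u y \<noteq> C y v" using sat_inc[OF e(1), of y v] xy xu yv u vV by auto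
        moreover have "C v u \<noteq> C y v"
        proof -
          have "C y v \<notin> S v" using v xy yv unfolding Ot_def by auto
          moreover have "C v u \<in> S v" using u(3) unfolding S_def by simp
          ultimately show ?thesis by auto
        qed
        ultimately show False using norb[OF assms(3) vV u(1) xy(2)] u xy xu yv by auto
      qed
    qed
    hence "card A \<le> card It" using card_mono[OF fIt] by blast
    ultimately show ?thesis using big[OF vV] by linarith
  qed
  have ItoO: "card Ot \<ge> k + 1" if v: "v \<in> It" for v
  proof -
    define B where "B = {w\<in>V. w \<noteq> v \<and> C w v \<in> S v}"
    have vV: "v \<in> V" using v It_def by auto
    have "S v \<subseteq> (\<lambda>w. C w v) ` B"
    proof
      fix e assume "e \<in> S v"
      hence se: "saturated_by V C e v" unfolding S_def by simp
      obtain x y where xy0: "x \<in> V" "y \<in> V" "x \<noteq> y" "C x y = e"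
        using sat_used[OF se] by blast
      have xy5: "x = v \<or> y = v" using sat_inc[OF se xy0] .
      note xy = xy0 xy5
      have "x \<noteq> v" using xy v se unfolding It_def S_def by auto
      hence "y = v" using xy by auto
      then show "e \<in> (\<lambda>w. C w v) ` B" using xy se \<open>x \<noteq> v\<close> unfolding B_def S_def by auto
    qed
    moreover have fB: "finite B" unfolding B_def using assms(1) by auto
    ultimately have "card (S v) \<le> card ((\<lambda>w. C w v) ` B)" by (simp add: card_mono)
    also have "\<dots> \<le> card B" by (rule card_image_le[OF fB])
    finally have "card (S v) \<le> card B" .
    moreover have "B \<subseteq> Ot"
    proof
      fix w assume wB: "w \<in> B"
      hence w: "w \<in> V" "w \<noteq> v" "saturated_by V C (C w v) v" unfolding B_def S_def by auto
      show "w \<in> Ot"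
      proof (rule ccontr)
        assume "w \<notin> Ot"
        hence wI: "w \<in> It" using cover w by auto
        have "\<not> S w \<subseteq> {C v w}"
          using card_mono[of "{C v w}" "S w"] big[OF w(1)] k2 by auto
        then obtain e where e: "saturated_by V C e w" "e \<noteq> C v w" unfolding S_def by auto
        obtain x y where xy0: "x \<in> V" "y \<in> V" "x \<noteq> y" "C x y = e"
          using sat_used[OF e(1)] by blast
        have xy5: "x = w \<or> y = w" using sat_inc[OF e(1) xy0] .
        note xy = xy0 xy5
        have "x \<noteq> w" using xy wI e unfolding It_def S_def by auto
        hence yw: "y = w" using xy by auto
        have xv: "x \<noteq> v" using xy yw e by auto
        have "C x w \<noteq> C w v" using sat_inc[OF w(3), of x w] xy yw xv w by auto
        moreover have "C v x \<noteq> C x w" using sat_inc[OF e(1), of v x] xy yw xv w vV by auto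
        moreover have "C v x \<noteq> C w v"
        proof -
          have "C v x \<notin> S v" using v xy xv unfolding It_def by auto
          moreover have "C w v \<in> S v" using w(3) unfolding S_def by simp
          ultimately show ?thesis by auto
        qed
        ultimately show False using norb[OF assms(3) vV xy(1) w(1)] w xy yw xv by auto
      qed
    qed
    hence "card B \<le> card Ot" using card_mono[OF fOt] by blast
    ultimately show ?thesis using big[OF vV] by linarith
  qed
  have "V \<noteq> {}" using assms(2) by auto
  then obtain v where "v \<in> V" by auto
  have both: "card Ot \<ge> k + 1 \<and> card It \<ge> k + 1"
  proof (cases "v \<in> Ot")
    case True
    have ci: "card It \<ge> k + 1" using OtoI[OF True] .
    have "It \<noteq> {}" using ci by auto
    then obtain u where "u \<in> It" by auto
    then show ?thesis using ItoO ci by blast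
  next
    case False
    hence vI: "v \<in> It" using cover \<open>v \<in> V\<close> by auto
    have co: "card Ot \<ge> k + 1" using ItoO[OF vI] .
    have "Ot \<noteq> {}" using co by auto
    then obtain u where "u \<in> Ot" by auto
    then show ?thesis using OtoI co by blast
  qed
  have "Ot \<union> It \<subseteq> V" unfolding Ot_def It_def by auto
  hence "card (Ot \<union> It) \<le> card V" using card_mono assms(1) by blast
  moreover have "card (Ot \<union> It) = card Ot + card It"
    using card_Un_disjoint[OF fOt fIt] disj by blast
  ultimately show False using both unfolding k_def by linarith
qed

end
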